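(* Let $N\ge1$, $f:\mathbb{N}^N\to\mathbb{N}$, $p$ a prime, $k\ge0$ and $\boldsymbol{\ell}\in\mathbb{N}^N$. Write $k=k_0+k_1p$ with $0\le k_0<p$, and $\boldsymbol{\ell}=\boldsymbol{\ell}_0+p\mathbf{x}$ with $\mathbf{x}\in\mathbb{N}^N$ and every entry of $\boldsymbol{\ell}_0$ in $\{0,\dots,p-1\}$. Then $$\binom{k}{\boldsymbol{\ell}}_f\equiv\sum_{\mathbf{m}\in\mathbb{N}^N}\binom{k_1}{\mathbf{x}-\mathbf{m}}_f\binom{k_0}{\boldsymbol{\ell}_0+p\mathbf{m}}_f\pmod p.$$
   Context: $\mathbb{N}=\{0,1,2,\dots\}$. For $k\ge0$ and $\mathbf{y}\in\mathbb{Z}^N$, $\binom{k}{\mathbf{y}}_f=\sum_{\mathbf{m}_1+\cdots+\mathbf{m}_k=\mathbf{y}} f(\mathbf{m}_1)\cdots f(\mathbf{m}_k)$ over tuples of vectors in $\mathbb{N}^N$ (in particular it is $0$ if $\mathbf{y}$ has a negative entry). *)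

theory Defs
  imports "HOL-Library.Groups_Big_Fun" "HOL-Number_Theory.Cong"
begin

text \<open>Vectors in N^N / Z^N are functions from a finite index type 'n (|'n| = N >= 1).\<close>
definition gbinom :: "(('n::finite \<Rightarrow> nat) \<Rightarrow> nat) \<Rightarrow> nat \<Rightarrow> ('n \<Rightarrow> int) \<Rightarrow> nat" where
  "gbinom f k y =
     (\<Sum>ms \<in> {ms. length ms = k \<and> (\<lambda>j. \<Sum>m\<leftarrow>ms. int (m j)) = y}. prod_list (map f ms))"

end

theory Submission imports Defs "HOL-Number_Theory.Number_Theory" "HOL-Combinatorics.Multiset_Permutations" "HOL-Library.FuncSet" begin

definition vs :: "('n::finite \<Rightarrow> nat) list \<Rightarrow> 'n \<Rightarrow> nat" where
  "vs ms = (\<lambda>j. \<Sum>m\<leftarrow>ms. m j)"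

definition Ls :: "nat \<Rightarrow> ('n::finite \<Rightarrow> nat) \<Rightarrow> ('n \<Rightarrow> nat) list set" where
  "Ls k y = {ms. length ms = k \<and> vs ms = y}"

definition G :: "(('n::finite \<Rightarrow> nat) \<Rightarrow> nat) \<Rightarrow> nat \<Rightarrow> ('n \<Rightarrow> nat) \<Rightarrow> nat" where
  "G f k y = (\<Sum>ms\<in>Ls k y. prod_list (map f ms))"

definition Box :: "('n::finite \<Rightarrow> nat) \<Rightarrow> ('n \<Rightarrow> nat) set" where
  "Box y = {z. \<forall>j. z j \<le> y j}"

lemma finite_Box: "finite (Box y)"
proof -
  have "Box y = Pi\<^sub>E UNIV (\<lambda>j. {..y j})" by (auto simp: Box_def PiE_def Pi_def extensional_def)
  then show ?thesis by (simp add: finite_PiE)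
qed

lemma vs_Cons: "vs (m # ms) = (\<lambda>j. m j + vs ms j)"
  by (simp add: vs_def)

lemma vs_append: "vs (us @ ws) = (\<lambda>j. vs us j + vs ws j)"
  by (simp add: vs_def)

lemma vs_mem_le: "m \<in> set ms \<Longrightarrow> m j \<le> vs ms j"
  by (induction ms) (auto simp: vs_Cons)

lemma finite_Ls: "finite (Ls k y)"
proof -
  have "Ls k y \<subseteq> {xs. set xs \<subseteq> Box y \<and> length xs = k}"
    using vs_mem_le by (fastforce simp: Ls_def Box_def)
  then show ?thesis using finite_lists_length_eq[OF finite_Box] finite_subset by blast
qed

lemma gbinom_G_gen: "gbinom f k y = (if \<forall>j. y j \<ge> 0 then G f k (\<lambda>j. nat (y j)) else 0)"
proof -
  have eq: "(\<lambda>j. \<Sum>m\<leftarrow>ms. int (m j)) = (\<lambda>j. int (vs ms j))" for ms :: "('a \<Rightarrow> nat) list"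
    by (simp add: vs_def sum_list_of_nat[symmetric] o_def)
  show ?thesis
  proof (cases "\<forall>j. y j \<ge> 0")
    case True
    have "{ms. length ms = k \<and> (\<lambda>j. \<Sum>m\<leftarrow>ms. int (m j)) = y} = Ls k (\<lambda>j. nat (y j))"
      using True by (auto simp: Ls_def eq fun_eq_iff; metis nat_int)
    then show ?thesis using True by (simp add: gbinom_def G_def)
  next
    case False
    then obtain j where "y j < 0" by (meson not_le)
    then have E: "{ms. length ms = k \<and> (\<lambda>j. \<Sum>m\<leftarrow>ms. int (m j)) = y} = {}"
      by (auto simp: eq fun_eq_iff) (metis of_nat_less_0_iff)
    show ?thesis using False by (simp only: gbinom_def E sum.empty) simp
  qed
qed

lemma G0: "G f 0 y = (if y = (\<lambda>j. 0) then 1 else 0)"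
proof -
  have "Ls 0 y = (if y = (\<lambda>j. 0) then {[]} else {})" by (auto simp: Ls_def vs_def)
  then show ?thesis by (simp add: G_def)
qed

lemma G1: "G f 1 y = f y"
proof -
  have "Ls 1 y = {[y]}" by (auto simp: Ls_def vs_def length_Suc_conv)
  then show ?thesis by (simp add: G_def)
qed

lemma conv: "G f (a + b) y = (\<Sum>w\<in>Box y. G f a w * G f b (\<lambda>j. y j - w j))"
proof -
  let ?S = "Sigma (Box y) (\<lambda>w. Ls a w \<times> Ls b (\<lambda>j. y j - w j))"
  let ?h = "\<lambda>(w, u, v). (u::('a \<Rightarrow> nat) list) @ v"
  have inj: "inj_on ?h ?S"
    unfolding inj_on_def Ls_def by (auto simp: append_eq_append_conv)
  have img: "?h ` ?S = Ls (a + b) y"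
  proof
    show "?h ` ?S \<subseteq> Ls (a + b) y"
      by (auto simp: Ls_def Box_def vs_append)
    show "Ls (a + b) y \<subseteq> ?h ` ?S"
    proof
      fix ms assume ms: "ms \<in> Ls (a + b) y"
      have e: "y = (\<lambda>j. vs (take a ms) j + vs (drop a ms) j)"
        using ms vs_append[of "take a ms" "drop a ms"] by (simp add: Ls_def)
      have "(vs (take a ms), take a ms, drop a ms) \<in> ?S"
        using ms by (subst (asm) e, subst e) (auto simp: Ls_def Box_def)
      then show "ms \<in> ?h ` ?S" by (auto intro!: image_eqI[where x="(vs (take a ms), take a ms, drop a ms)"])
    qed
  qed
  have "(\<Sum>w\<in>Box y. G f a w * G f b (\<lambda>j. y j - w j))
      = (\<Sum>w\<in>Box y. \<Sum>uv\<in>Ls a w \<times> Ls b (\<lambda>j. y j - w j). prod_list (map f (fst uv @ snd uv)))"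
    by (simp add: G_def sum_product sum.cartesian_product case_prod_beta)
  also have "\<dots> = (\<Sum>x\<in>?S. prod_list (map f (?h x)))"
    by (subst sum.Sigma) (auto simp: finite_Box finite_Ls case_prod_beta)
  also have "\<dots> = (\<Sum>ms\<in>?h ` ?S. prod_list (map f ms))"
    using sum.reindex[OF inj, of "\<lambda>ms. prod_list (map f ms)"] by (simp add: o_def)
  also have "\<dots> = G f (a + b) y" by (simp add: img G_def)
  finally show ?thesis by simp
qed

lemma fermat_nat: "prime (p::nat) \<Longrightarrow> [a ^ p = a] (mod p)"
proof (cases "p dvd a")
  case True
  assume "prime p"
  then have "p > 0" by (simp add: prime_gt_0_nat)
  have "p dvd a ^ p" using True \<open>p > 0\<close> by (simp add: dvd_power_iff_le dvd_trans[OF True] dvd_power)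
  with True show ?thesis by (simp add: cong_def)
next
  case False
  assume pr: "prime p"
  then have "[a ^ (p - 1) = 1] (mod p)" using False by (rule fermat_theorem)
  then have "[a * a ^ (p - 1) = a * 1] (mod p)" by (rule cong_scalar_left)
  moreover have "a * a ^ (p - 1) = a ^ p" using pr
    by (metis One_nat_def Suc_pred power_Suc prime_gt_0_nat)
  ultimately show ?thesis by simp
qed

lemma mset_count_size: "count M x = size M \<Longrightarrow> M = replicate_mset (size M) x"
proof -
  assume c: "count M x = size M"
  have "M = {#y\<in>#M. y = x#} + {#y\<in>#M. y \<noteq> x#}" by (rule multiset_partition)
  moreover have "size M = count M x + size {#y\<in>#M. y \<noteq> x#}"
    by (subst (1) multiset_partition[of M "\<lambda>y. y = x"]) (simp add: filter_eq_replicate_mset)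
  ultimately show ?thesis using c by (metis add_cancel_right_right filter_eq_replicate_mset size_eq_0_iff_empty)
qed

lemma vs_mset: "mset ms = mset ms' \<Longrightarrow> vs ms = vs ms'"
proof -
  assume "mset ms = mset ms'"
  then have "mset (map (\<lambda>m. m j) ms) = mset (map (\<lambda>m. m j) ms')" for j by simp
  then have "sum_list (map (\<lambda>m. m j) ms) = sum_list (map (\<lambda>m. m j) ms')" for j
    by (metis sum_mset_sum_list)
  then show ?thesis by (simp add: vs_def fun_eq_iff)
qed

lemma vs_replicate: "vs (replicate n z) = (\<lambda>j. n * z j)"
  by (simp add: vs_def sum_list_replicate)



lemma mset_eq_replicate: "mset xs = replicate_mset n x \<Longrightarrow> xs = replicate n x"
proof -
  assume h: "mset xs = replicate_mset n x"
  have "size (mset xs) = size (replicate_mset n x)" using h by simp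
  then have L: "length xs = n" by simp
  have "\<forall>y\<in>set xs. y = x"
  proof
    fix y assume "y \<in> set xs"
    then have "y \<in># mset xs" by simp
    then have "y \<in># replicate_mset n x" using h by simp
    then show "y = x" by (simp split: if_splits)
  qed
  then have A: "replicate (length xs) x = xs" by (rule replicate_length_same)
  show ?thesis using A L by simp
qed

lemma frob:
  assumes pr: "prime p"
  shows "[G f p y = (if \<forall>j. p dvd y j then f (\<lambda>j. y j div p) else 0)] (mod p)"
proof -
  let ?pr = "\<lambda>ms. prod_list (map f ms)"
  let ?L = "Ls p y"
  let ?z = "\<lambda>j. y j div p"
  let ?R = "replicate_mset p ?z"
  have p0: "p > 0" using pr prime_gt_0_nat by blast
  have "G f p y = (\<Sum>M\<in>mset ` ?L. \<Sum>ms\<in>{ms\<in>?L. mset ms = M}. ?pr ms)"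
    unfolding G_def by (rule sum.image_gen[OF finite_Ls])
  also have "[\<dots> = (\<Sum>M\<in>mset ` ?L. if M = ?R then f ?z else 0)] (mod p)"
  proof (rule cong_sum)
    fix M assume "M \<in> mset ` ?L"
    then obtain ms0 where ms0: "ms0 \<in> ?L" "M = mset ms0" by blast
    have perm: "{ms\<in>?L. mset ms = M} = permutations_of_multiset M"
    proof (rule Set.set_eqI, rule iffI)
      fix xs assume "xs \<in> {ms\<in>?L. mset ms = M}"
      then show "xs \<in> permutations_of_multiset M" by (simp add: permutations_of_multisetI)
    next
      fix xs assume "xs \<in> permutations_of_multiset M"
      then have "mset xs = mset ms0" using ms0 permutations_of_multisetD by simp
      then have "length xs = length ms0" "vs xs = vs ms0" using mset_eq_length vs_mset by blast+
      then show "xs \<in> {ms\<in>?L. mset ms = M}" using ms0 \<open>mset xs = mset ms0\<close> by (simp add: Ls_def)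
    qed
    have prc: "?pr ms = prod_mset (image_mset f M)" if "ms \<in> permutations_of_multiset M" for ms
      using permutations_of_multisetD[OF that] prod_mset_prod_list[of "map f ms"] by simp
    have sM: "size M = p" using ms0 by (simp add: Ls_def)
    have inner: "(\<Sum>ms\<in>{ms\<in>?L. mset ms = M}. ?pr ms) = card (permutations_of_multiset M) * prod_mset (image_mset f M)"
      by (simp add: perm prc)
    show "[(\<Sum>ms\<in>{ms\<in>?L. mset ms = M}. ?pr ms) = (if M = ?R then f ?z else 0)] (mod p)"
    proof (cases "M = ?R")
      case True
      have "permutations_of_multiset M = {replicate p ?z}"
      proof (rule Set.set_eqI)
        fix xs
        show "xs \<in> permutations_of_multiset M \<longleftrightarrow> xs \<in> {replicate p ?z}"
          using True mset_eq_replicate[of xs p ?z] by (auto simp: permutations_of_multiset_def)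
      qed
      then have "(\<Sum>ms\<in>{ms\<in>?L. mset ms = M}. ?pr ms) = f ?z ^ p"
        by (simp add: perm)
      then show ?thesis using True fermat_nat[OF pr] by simp
    next
      case False
      have cnt: "count M x < p" for x
      proof (rule ccontr)
        assume "\<not> count M x < p"
        then have "count M x = size M" using count_le_size[of M x] sM by simp
        then have Mr: "M = replicate_mset p x" using mset_count_size[of M x] sM by simp
        then have "vs (replicate p x) = y" using ms0 vs_mset[of "replicate p x" ms0]
          by (simp add: Ls_def)
        then have "y = (\<lambda>j. p * x j)" by (simp add: vs_replicate)
        then have "x = ?z" using p0 by (simp add: fun_eq_iff)
        with Mr False show False by simp
      qed
      have "\<not> p dvd (\<Prod>x\<in>set_mset M. fact (count M x))"
      proof
        assume "p dvd (\<Prod>x\<in>set_mset M. fact (count M x))"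
        then obtain x where "p dvd fact (count M x)"
          using prime_dvd_prod_iff[OF finite_set_mset pr, of "\<lambda>x. fact (count M x)" M] by auto
        then show False using prime_dvd_fact_iff[OF pr] cnt[of x] by simp
      qed
      moreover have "p dvd card (permutations_of_multiset M) * (\<Prod>x\<in>set_mset M. fact (count M x))"
        by (simp add: card_permutations_of_multiset_aux sM prime_dvd_fact_iff[OF pr])
      ultimately have "p dvd card (permutations_of_multiset M)"
        using prime_dvd_mult_iff[OF pr] by simp
      then show ?thesis using False by (simp add: inner cong_def)
    qed
  qed
  also have "(\<Sum>M\<in>mset ` ?L. if M = ?R then f ?z else 0) = (if ?R \<in> mset ` ?L then f ?z else 0)"
    by (simp add: sum.delta finite_Ls)
  also have "(?R \<in> mset ` ?L) = (\<forall>j. p dvd y j)"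
  proof
    assume "?R \<in> mset ` ?L"
    then obtain ms where "ms \<in> ?L" "mset ms = ?R" by auto
    then have "vs (replicate p ?z) = y" using vs_mset[of "replicate p ?z" ms] by (simp add: Ls_def)
    then have "(\<lambda>j. p * (y j div p)) = y" by (simp only: vs_replicate)
    then show "\<forall>j. p dvd y j" by (metis dvd_triv_left)
  next
    assume "\<forall>j. p dvd y j"
    then have "replicate p ?z \<in> ?L" by (simp add: Ls_def vs_replicate fun_eq_iff)
    then show "?R \<in> mset ` ?L" by (metis image_eqI mset_replicate)
  qed
  finally show ?thesis .
qed

lemma frobc_step:
  assumes p0: "p > 0"
  shows "(\<Sum>w\<in>Box y. (if \<forall>j. p dvd w j then G f c (\<lambda>j. w j div p) else 0) *
            (if \<forall>j. p dvd (y j - w j) then f (\<lambda>j. (y j - w j) div p) else 0))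
        = (if \<forall>j. p dvd y j then G f (Suc c) (\<lambda>j. y j div p) else 0)"
    (is "(\<Sum>w\<in>Box y. ?g w) = _")
proof (cases "\<forall>j. p dvd y j")
  case True
  let ?S = "{w\<in>Box y. \<forall>j. p dvd w j}"
  let ?m = "\<lambda>(u::'a \<Rightarrow> nat) j. p * u j"
  let ?yp = "\<lambda>j. y j div p"
  have "(\<Sum>w\<in>Box y. ?g w) = (\<Sum>w\<in>?S. ?g w)"
  proof -
    have z: "\<forall>w\<in>Box y - ?S. ?g w = 0" by auto
    show ?thesis using sum.mono_neutral_right[OF finite_Box _ z] by auto
  qed
  also have "?S = ?m ` Box ?yp"
  proof (rule Set.set_eqI, rule iffI)
    fix w assume w: "w \<in> ?S"
    have "w = ?m (\<lambda>j. w j div p)" using w by (auto simp: fun_eq_iff)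
    moreover have "(\<lambda>j. w j div p) \<in> Box ?yp" using w by (auto simp: Box_def div_le_mono)
    ultimately show "w \<in> ?m ` Box ?yp" by (rule image_eqI)
  next
    fix w assume "w \<in> ?m ` Box ?yp"
    then obtain u where u: "u \<in> Box ?yp" "w = ?m u" by blast
    have "p * u j \<le> y j" for j
    proof -
      have "p * u j \<le> p * (y j div p)" using u(1) by (simp add: Box_def)
      also have "\<dots> = y j" using True by simp
      finally show ?thesis .
    qed
    then show "w \<in> ?S" using u(2) by (simp add: Box_def)
  qed
  also have "(\<Sum>w\<in>?m ` Box ?yp. ?g w) = (\<Sum>u\<in>Box ?yp. ?g (?m u))"
  proof -
    have inj: "inj_on ?m (Box ?yp)" using p0 by (auto simp: inj_on_def fun_eq_iff)
    show ?thesis using sum.reindex[OF inj, of ?g] by (simp only: o_def)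
  qed
  also have "\<dots> = (\<Sum>u\<in>Box ?yp. G f c u * G f 1 (\<lambda>j. ?yp j - u j))"
  proof (rule sum.cong[OF refl])
    fix u assume u: "u \<in> Box ?yp"
    have e: "y j - p * u j = p * (?yp j - u j)" for j
      using True by (simp add: diff_mult_distrib2)
    show "?g (?m u) = G f c u * G f 1 (\<lambda>j. ?yp j - u j)"
      using p0 G1[of f "\<lambda>j. ?yp j - u j"] by (simp add: e)
  qed
  also have "\<dots> = G f (Suc c) ?yp" using conv[of f c 1 ?yp] by simp
  finally show ?thesis using True by simp
next
  case False
  have zz: "?g w = 0" if w: "w \<in> Box y" for w
  proof (rule ccontr)
    assume "?g w \<noteq> 0"
    then have a: "\<forall>j. p dvd w j" "\<forall>j. p dvd (y j - w j)" by (auto split: if_splits)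
    have "p dvd y j" for j
    proof -
      have "y j = w j + (y j - w j)" using w by (simp add: Box_def)
      then show ?thesis using a by (metis dvd_add)
    qed
    with False show False by blast
  qed
  have S0: "(\<Sum>w\<in>Box y. ?g w) = 0" by (rule sum.neutral, rule ballI, rule zz)
  have "(if \<forall>j. p dvd y j then G f (Suc c) (\<lambda>j. y j div p) else 0) = 0"
    by (rule if_not_P[OF False])
  with S0 show ?thesis by (rule trans[OF _ sym])
qed


lemma frobc:
  assumes pr: "prime p"
  shows "[G f (p * c) y = (if \<forall>j. p dvd y j then G f c (\<lambda>j. y j div p) else 0)] (mod p)"
proof (induction c arbitrary: y)
  case 0
  have p0: "p > 0" using pr prime_gt_0_nat by blast
  show ?case
  proof (cases "y = (\<lambda>j. 0)")
    case True
    then show ?thesis by (simp add: G0)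
  next
    case False
    then obtain j where j: "y j \<noteq> 0" by auto
    have "(\<lambda>j. y j div p) \<noteq> (\<lambda>j. 0) \<or> \<not> (\<forall>j. p dvd y j)"
    proof (rule ccontr)
      assume "\<not> ?thesis"
      then have "y j div p = 0" "p dvd y j" by (auto simp: fun_eq_iff)
      with j show False by auto
    qed
    then show ?thesis using False by (auto simp: G0)
  qed
next
  case (Suc c)
  have p0: "p > 0" using pr prime_gt_0_nat by blast
  define S1 where "S1 = (\<Sum>w\<in>Box y. G f (p * c) w * G f p (\<lambda>j. y j - w j))"
  define S2 where "S2 = (\<Sum>w\<in>Box y. (if \<forall>j. p dvd w j then G f c (\<lambda>j. w j div p) else 0) *
            (if \<forall>j. p dvd (y j - w j) then f (\<lambda>j. (y j - w j) div p) else 0))"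
  have E1: "G f (p * Suc c) y = S1"
    unfolding S1_def using conv[of f "p * c" p y] by (simp add: add.commute)
  have C: "[S1 = S2] (mod p)"
    unfolding S1_def S2_def by (rule cong_sum, rule cong_mult[OF Suc.IH frob[OF pr]])
  have E3: "S2 = (if \<forall>j. p dvd y j then G f (Suc c) (\<lambda>j. y j div p) else 0)"
    unfolding S2_def by (rule frobc_step[OF p0])
  show ?case unfolding E1 E3[symmetric] by (rule C)
qed

lemma main_reindex:
  fixes l l0 x :: "'n::finite \<Rightarrow> nat"
  assumes p0: "p > 0" and l: "\<And>j. l j = l0 j + p * x j" and l0: "\<And>j. l0 j < p"
  shows "(\<Sum>w\<in>Box l. G f k0 w * (if \<forall>j. p dvd (l j - w j) then G f k1 (\<lambda>j. (l j - w j) div p) else 0))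
       = (\<Sum>m\<in>Box x. G f k1 (\<lambda>j. x j - m j) * G f k0 (\<lambda>j. l0 j + p * m j))"
    (is "(\<Sum>w\<in>Box l. ?g w) = _")
proof -
  let ?S = "{w\<in>Box l. \<forall>j. p dvd (l j - w j)}"
  let ?m = "\<lambda>(m::'n \<Rightarrow> nat) j. l0 j + p * m j"
  have "(\<Sum>w\<in>Box l. ?g w) = (\<Sum>w\<in>?S. ?g w)"
  proof -
    have z: "\<forall>w\<in>Box l - ?S. ?g w = 0" by auto
    show ?thesis using sum.mono_neutral_right[OF finite_Box _ z] by auto
  qed
  also have "?S = ?m ` Box x"
  proof (rule Set.set_eqI, rule iffI)
    fix w assume w: "w \<in> ?S"
    have wj: "w j = l0 j + p * (w j div p) \<and> w j div p \<le> x j" for j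
    proof -
      have le: "w j \<le> l j" using w by (simp add: Box_def)
      have d: "p dvd (l j - w j)" using w by simp
      have "w j mod p = l j mod p"
        using le d by (metis mod_eq_dvd_iff_nat)
      also have "l j mod p = l0 j" using l[of j] l0[of j] by simp
      finally have md: "w j mod p = l0 j" .
      have "w j = p * (w j div p) + w j mod p" by simp
      then have A: "w j = l0 j + p * (w j div p)" using md by simp
      have "w j div p \<le> l j div p" using le by (rule div_le_mono)
      also have "l j div p = x j" using l[of j] l0[of j] p0 by simp
      finally show ?thesis using A by simp
    qed
    have "w = ?m (\<lambda>j. w j div p)" using wj by (simp add: fun_eq_iff)
    moreover have "(\<lambda>j. w j div p) \<in> Box x" using wj by (simp add: Box_def)
    ultimately show "w \<in> ?m ` Box x" by (rule image_eqI)
  next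
    fix w assume "w \<in> ?m ` Box x"
    then obtain m where m: "m \<in> Box x" "w = ?m m" by blast
    have "l0 j + p * m j \<le> l j \<and> p dvd (l j - (l0 j + p * m j))" for j
    proof -
      have mj: "m j \<le> x j" using m(1) by (simp add: Box_def)
      have "l j - (l0 j + p * m j) = p * (x j - m j)" using l[of j] mj by (simp add: diff_mult_distrib2)
      moreover have "p * m j \<le> p * x j" using mj by simp
      ultimately show ?thesis using l[of j] by simp
    qed
    then show "w \<in> ?S" using m(2) by (simp add: Box_def)
  qed
  also have "(\<Sum>w\<in>?m ` Box x. ?g w) = (\<Sum>m\<in>Box x. ?g (?m m))"
  proof -
    have inj: "inj_on ?m (Box x)" using p0 by (auto simp: inj_on_def fun_eq_iff)
    show ?thesis using sum.reindex[OF inj, of ?g] by (simp only: o_def)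
  qed
  also have "\<dots> = (\<Sum>m\<in>Box x. G f k1 (\<lambda>j. x j - m j) * G f k0 (\<lambda>j. l0 j + p * m j))"
  proof (rule sum.cong[OF refl])
    fix m assume m: "m \<in> Box x"
    have e: "l j - (l0 j + p * m j) = p * (x j - m j)" for j
      using l[of j] m by (simp add: Box_def diff_mult_distrib2)
    show "?g (?m m) = G f k1 (\<lambda>j. x j - m j) * G f k0 (\<lambda>j. l0 j + p * m j)"
      using p0 by (simp add: e)
  qed
  finally show ?thesis .
qed

lemma gbinom_G: "gbinom f k (\<lambda>j. int (y j)) = G f k y"
  by (simp add: gbinom_G_gen)

theorem theorem14:
  fixes f :: "('n::finite \<Rightarrow> nat) \<Rightarrow> nat"
    and p k k0 k1 :: nat
    and l l0 x :: "'n \<Rightarrow> nat"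
  assumes "prime p"
    and "k = k0 + k1 * p" and "k0 < p"
    and "\<And>j. l j = l0 j + p * x j" and "\<And>j. l0 j < p"
  shows "[gbinom f k (\<lambda>j. int (l j))
          = Sum_any (\<lambda>m :: 'n \<Rightarrow> nat.
              gbinom f k1 (\<lambda>j. int (x j) - int (m j)) *
              gbinom f k0 (\<lambda>j. int (l0 j) + int p * int (m j)))] (mod p)"
proof -
  note pr = assms(1)
  have p0: "p > 0" using pr prime_gt_0_nat by blast
  have L: "gbinom f k (\<lambda>j. int (l j)) = G f k l"
    by (simp add: gbinom_G_gen)
  have sup: "{m. gbinom f k1 (\<lambda>j. int (x j) - int (m j)) *
              gbinom f k0 (\<lambda>j. int (l0 j) + int p * int (m j)) \<noteq> 0} \<subseteq> Box x"
  proof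
    fix m assume "m \<in> {m. gbinom f k1 (\<lambda>j. int (x j) - int (m j)) *
              gbinom f k0 (\<lambda>j. int (l0 j) + int p * int (m j)) \<noteq> 0}"
    then have "gbinom f k1 (\<lambda>j. int (x j) - int (m j)) \<noteq> 0" by auto
    then have "\<forall>j. int (x j) - int (m j) \<ge> 0" using gbinom_G_gen[of f k1] by metis
    then show "m \<in> Box x" by (simp add: Box_def)
  qed
  have R: "Sum_any (\<lambda>m :: 'n \<Rightarrow> nat.
              gbinom f k1 (\<lambda>j. int (x j) - int (m j)) *
              gbinom f k0 (\<lambda>j. int (l0 j) + int p * int (m j)))
      = (\<Sum>m\<in>Box x. G f k1 (\<lambda>j. x j - m j) * G f k0 (\<lambda>j. l0 j + p * m j))"
  proof -
    have "Sum_any (\<lambda>m :: 'n \<Rightarrow> nat.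
              gbinom f k1 (\<lambda>j. int (x j) - int (m j)) *
              gbinom f k0 (\<lambda>j. int (l0 j) + int p * int (m j)))
       = (\<Sum>m\<in>Box x. gbinom f k1 (\<lambda>j. int (x j) - int (m j)) *
              gbinom f k0 (\<lambda>j. int (l0 j) + int p * int (m j)))"
      by (rule Sum_any.expand_superset[OF finite_Box sup])
    also have "\<dots> = (\<Sum>m\<in>Box x. G f k1 (\<lambda>j. x j - m j) * G f k0 (\<lambda>j. l0 j + p * m j))"
    proof (rule sum.cong[OF refl])
      fix m assume m: "m \<in> Box x"
      have a: "gbinom f k1 (\<lambda>j. int (x j) - int (m j)) = G f k1 (\<lambda>j. x j - m j)"
      proof -
        have "\<forall>j. int (x j) - int (m j) \<ge> 0" using m by (simp add: Box_def)
        moreover have "(\<lambda>j. nat (int (x j) - int (m j))) = (\<lambda>j. x j - m j)" by (simp add: fun_eq_iff nat_minus_as_int)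
        ultimately show ?thesis by (simp add: gbinom_G_gen)
      qed
      have b: "gbinom f k0 (\<lambda>j. int (l0 j) + int p * int (m j)) = G f k0 (\<lambda>j. l0 j + p * m j)"
      proof -
        show ?thesis using gbinom_G[of f k0 "\<lambda>j. l0 j + p * m j"] by simp
      qed
      show "gbinom f k1 (\<lambda>j. int (x j) - int (m j)) * gbinom f k0 (\<lambda>j. int (l0 j) + int p * int (m j))
          = G f k1 (\<lambda>j. x j - m j) * G f k0 (\<lambda>j. l0 j + p * m j)" by (simp only: a b)
    qed
    finally show ?thesis .
  qed
  have E1: "G f k l = (\<Sum>w\<in>Box l. G f k0 w * G f (p * k1) (\<lambda>j. l j - w j))"
    using conv[of f k0 "p * k1" l] assms(2) by (simp add: mult.commute)
  have C: "[(\<Sum>w\<in>Box l. G f k0 w * G f (p * k1) (\<lambda>j. l j - w j))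
      = (\<Sum>w\<in>Box l. G f k0 w * (if \<forall>j. p dvd (l j - w j) then G f k1 (\<lambda>j. (l j - w j) div p) else 0))] (mod p)"
    by (rule cong_sum, rule cong_mult[OF cong_refl frobc[OF pr]])
  have E3: "(\<Sum>w\<in>Box l. G f k0 w * (if \<forall>j. p dvd (l j - w j) then G f k1 (\<lambda>j. (l j - w j) div p) else 0))
       = (\<Sum>m\<in>Box x. G f k1 (\<lambda>j. x j - m j) * G f k0 (\<lambda>j. l0 j + p * m j))"
    by (rule main_reindex[OF p0 assms(4) assms(5)])
  show ?thesis unfolding L R E1 E3[symmetric] by (rule C)
qed

end
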